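(* The class $\mathrm{Age}(C_3[I_\omega]^* )$ has the expansion property relative to $\mathrm{Age}(C_3[I_\omega])$, where $C_3[I_\omega]$ is the reduct of $C_3[I_\omega]^*$ to $\{E\}$.
   Context: Expansion property: let $L\subseteq L^*$ be relational languages, $\mathcal K$ a class of finite $L$-structures and $\mathcal K^*$ a class of finite $L^*$-structures whose $L$-reducts lie in $\mathcal K$. $\mathcal K^*$ has the expansion property relative to $\mathcal K$ if for every $\mathbf A\in\mathcal K$ there is $\mathbf B\in\mathcal K$ such that for all $\mathbf A^*,\mathbf B^*\in\mathcal K^*$ whose $L$-reducts are $\mathbf A$ and $\mathbf B$ respectively, $\mathbf A^*$ embeds into $\mathbf B^*$. The age of a structure is the class of finite structures embeddable in it. $C_3$ is the directed 3-cycle on $[3]=\{0,1,2\}$ with edges $(0,1),(1,2),(2,0)$. Fix a linear order $\prec$ on $\mathbb N$ with $(\mathbb N,\prec)\cong(\mathbb Q,<)$. $C_3[I_\omega]^*$ is the structure with universe $[3]\times\mathbb N$ in the language $\{E,P_0,P_1,P_2,<\}$ where $E((i,a),(j,b))$ iff $(i,j)$ is an edge of $C_3$; $P_i=\{i\}\times\mathbb N$; and $(i,a)<(j,b)$ iff $i<j$, or $i=j$ and $a\prec b$. *)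

theory Defs
  imports Main "HOL.Rat"
begin

text \<open>An L-structure: a universe and a binary relation E (only its restriction to the
universe is relevant).\<close>
record 'a lstr =
  univ :: "'a set"
  edge :: "'a \<Rightarrow> 'a \<Rightarrow> bool"

record 'a sstr =
  suniv :: "'a set"
  sedge :: "'a \<Rightarrow> 'a \<Rightarrow> bool"
  sp0 :: "'a \<Rightarrow> bool"
  sp1 :: "'a \<Rightarrow> bool"
  sp2 :: "'a \<Rightarrow> bool"
  sless :: "'a \<Rightarrow> 'a \<Rightarrow> bool"

definition emb_L :: "'a lstr \<Rightarrow> 'b lstr \<Rightarrow> ('a \<Rightarrow> 'b) \<Rightarrow> bool" where
  "emb_L A M f \<longleftrightarrow> inj_on f (univ A) \<and> f ` univ A \<subseteq> univ M \<and>
     (\<forall>x\<in>univ A. \<forall>y\<in>univ A. edge M (f x) (f y) \<longleftrightarrow> edge A x y)"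

definition emb_S :: "'a sstr \<Rightarrow> 'b sstr \<Rightarrow> ('a \<Rightarrow> 'b) \<Rightarrow> bool" where
  "emb_S A M f \<longleftrightarrow> inj_on f (suniv A) \<and> f ` suniv A \<subseteq> suniv M \<and>
     (\<forall>x\<in>suniv A. \<forall>y\<in>suniv A. sedge M (f x) (f y) \<longleftrightarrow> sedge A x y) \<and>
     (\<forall>x\<in>suniv A. sp0 M (f x) \<longleftrightarrow> sp0 A x) \<and>
     (\<forall>x\<in>suniv A. sp1 M (f x) \<longleftrightarrow> sp1 A x) \<and>
     (\<forall>x\<in>suniv A. sp2 M (f x) \<longleftrightarrow> sp2 A x) \<and>
     (\<forall>x\<in>suniv A. \<forall>y\<in>suniv A. sless M (f x) (f y) \<longleftrightarrow> sless A x y)"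

definition reduct :: "'a sstr \<Rightarrow> 'a lstr" where
  "reduct A = \<lparr>univ = suniv A, edge = sedge A\<rparr>"

definition is_reduct :: "'a sstr \<Rightarrow> 'a lstr \<Rightarrow> bool" where
  "is_reduct As A \<longleftrightarrow> suniv As = univ A \<and>
     (\<forall>x\<in>univ A. \<forall>y\<in>univ A. sedge As x y \<longleftrightarrow> edge A x y)"

text \<open>Ages. Every finite structure is isomorphic to one whose universe is a finite set of
naturals, so (up to isomorphism) the age is represented by finite structures on nat.\<close>
definition age_L :: "'b lstr \<Rightarrow> nat lstr set" where
  "age_L M = {A. finite (univ A) \<and> (\<exists>f. emb_L A M f)}"

definition age_S :: "'b sstr \<Rightarrow> nat sstr set" where
  "age_S M = {A. finite (suniv A) \<and> (\<exists>f. emb_S A M f)}"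

definition expansion_property :: "nat sstr set \<Rightarrow> nat lstr set \<Rightarrow> bool" where
  "expansion_property Ks K \<longleftrightarrow>
     (\<forall>A\<in>K. \<exists>B\<in>K. \<forall>As\<in>Ks. \<forall>Bs\<in>Ks.
        is_reduct As A \<longrightarrow> is_reduct Bs B \<longrightarrow> (\<exists>f. emb_S As Bs f))"

definition C3_edge :: "nat \<Rightarrow> nat \<Rightarrow> bool" where
  "C3_edge i j \<longleftrightarrow> (i, j) \<in> {(0,1), (1,2), (2,0)}"

text \<open>Universe [3] x N, with prec a linear order on N of type (Q,<).\<close>
definition C3I_star :: "(nat \<Rightarrow> nat \<Rightarrow> bool) \<Rightarrow> (nat \<times> nat) sstr" where
  "C3I_star prec = \<lparr>suniv = {p. fst p < 3},
     sedge = (\<lambda>(i,a) (j,b). C3_edge i j),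
     sp0 = (\<lambda>(i,a). i = 0),
     sp1 = (\<lambda>(i,a). i = 1),
     sp2 = (\<lambda>(i,a). i = 2),
     sless = (\<lambda>(i,a) (j,b). i < j \<or> (i = j \<and> prec a b))\<rparr>"

definition C3I :: "(nat \<Rightarrow> nat \<Rightarrow> bool) \<Rightarrow> (nat \<times> nat) lstr" where
  "C3I prec = reduct (C3I_star prec)"

end

theory Submission
  imports Defs
begin

lemma ordemb:
  fixes S T :: "'a::linorder set"
  assumes "finite S" "finite T" "card S \<le> card T"
  shows "\<exists>\<phi>. (\<forall>u\<in>S. \<phi> u \<in> T) \<and> (\<forall>u\<in>S. \<forall>v\<in>S. u < v \<longrightarrow> \<phi> u < \<phi> v)"
proof -
  define ys where "ys = sorted_list_of_set T"
  define c where "c u = card {w\<in>S. w < u}" for u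
  have cl: "c u < card S" if "u \<in> S" for u
  proof -
    have "{w\<in>S. w < u} \<subset> S" using that by auto
    thus ?thesis unfolding c_def using assms(1) psubset_card_mono by blast
  qed
  have cm: "c u < c v" if "u \<in> S" "v \<in> S" "u < v" for u v
  proof -
    have "{w\<in>S. w < u} \<subset> {w\<in>S. w < v}" using that by auto
    thus ?thesis unfolding c_def using assms(1) psubset_card_mono
      by (metis (no_types, lifting) finite_subset mem_Collect_eq subsetI)
  qed
  have len: "length ys = card T" unfolding ys_def by simp
  have st: "sorted_wrt (<) ys" unfolding ys_def by simp
  have sety: "set ys = T" unfolding ys_def using assms(2) by simp
  show ?thesis
  proof (rule exI[of _ "\<lambda>u. ys ! c u"], intro conjI ballI impI)
    fix u assume "u \<in> S"
    then have "c u < length ys" using cl len assms(3) by fastforce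
    thus "ys ! c u \<in> T" using sety nth_mem by blast
  next
    fix u v assume uv: "u \<in> S" "v \<in> S" "u < v"
    have "c v < length ys" using cl len assms(3) uv by fastforce
    thus "ys ! c u < ys ! c v" using sorted_wrt_nth_less[OF st cm[OF uv]] by blast
  qed
qed

lemma emb_C3:
  assumes "emb_S X (C3I_star prec) f" "x \<in> suniv X" "y \<in> suniv X"
  shows "fst (f x) < 3"
    "sedge X x y \<longleftrightarrow> C3_edge (fst (f x)) (fst (f y))"
    "sp0 X x \<longleftrightarrow> fst (f x) = 0"
    "sp1 X x \<longleftrightarrow> fst (f x) = 1"
    "sp2 X x \<longleftrightarrow> fst (f x) = 2"
    "sless X x y \<longleftrightarrow> fst (f x) < fst (f y) \<or> (fst (f x) = fst (f y) \<and> prec (snd (f x)) (snd (f y)))"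
  using assms unfolding emb_S_def C3I_star_def by (auto simp: split_beta)

lemma mod3_a: "(a::nat) < 3 \<Longrightarrow> b < 3 \<Longrightarrow> c = (a + 1) mod 3 \<Longrightarrow> c = (b + 1) mod 3 \<Longrightarrow> d = 0 \<Longrightarrow> a = (b + d) mod 3"
  by presburger

lemma mod3_b: "(a::nat) < 3 \<Longrightarrow> b < 3 \<Longrightarrow> c = (a + 1) mod 3 \<Longrightarrow> b = (c + 1) mod 3 \<Longrightarrow> d = 2 \<Longrightarrow> b = (a + d) mod 3"
  by presburger

lemma mod3_c: "(r::nat) < 3 \<Longrightarrow> p < 3 \<Longrightarrow> (r + (p + 3 - r) mod 3) mod 3 = p"
proof -
  assume a: "r < 3" "p < 3"
  have "r = 0 \<or> r = 1 \<or> r = 2" "p = 0 \<or> p = 1 \<or> p = 2" using a by auto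
  thus ?thesis by auto
qed

lemma C3_edge_iff: "i < 3 \<Longrightarrow> j < 3 \<Longrightarrow> C3_edge i j \<longleftrightarrow> j = (i + 1) mod 3"
  unfolding C3_edge_def by (cases i; cases j; auto; presburger?)


theorem theorem5p6:
  fixes prec :: "nat \<Rightarrow> nat \<Rightarrow> bool"
  assumes "\<exists>h :: nat \<Rightarrow> rat. bij h \<and> (\<forall>a b. prec a b \<longleftrightarrow> h a < h b)"
  shows "expansion_property (age_S (C3I_star prec)) (age_L (C3I prec))"
proof -
  obtain h :: "nat \<Rightarrow> rat" where hb: "bij h" and hp: "\<And>a b. prec a b \<longleftrightarrow> h a < h b"
    using assms by blast
  have hinj: "h a = h b \<Longrightarrow> a = b" for a b using hb by (meson bij_def injD)
  show ?thesis unfolding expansion_property_def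
  proof (intro ballI)
    fix A assume "A \<in> age_L (C3I prec)"
    define n where "n = card (univ A)"
    define m where "m = n + 1"
    have m0: "0 < m" unfolding m_def by simp
    define B :: "nat lstr" where "B = \<lparr>univ = {0..<3*m}, edge = (\<lambda>x y. C3_edge (x div m) (y div m))\<rparr>"
    have "emb_L B (C3I prec) (\<lambda>x. (x div m, x mod m))"
    proof -
      have "inj_on (\<lambda>x. (x div m, x mod m)) (univ B)"
        by (rule inj_onI) (metis div_mult_mod_eq prod.inject)
      moreover have "x div m < 3" if "x < 3 * m" for x
        using that m0 by (simp add: less_mult_imp_div_less)
      ultimately show ?thesis unfolding emb_L_def C3I_def reduct_def C3I_star_def B_def
        by auto
    qed
    hence Bage: "B \<in> age_L (C3I prec)" unfolding age_L_def B_def by auto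
    show "\<exists>B\<in>age_L (C3I prec). \<forall>As\<in>age_S (C3I_star prec). \<forall>Bs\<in>age_S (C3I_star prec).
            is_reduct As A \<longrightarrow> is_reduct Bs B \<longrightarrow> (\<exists>f. emb_S As Bs f)"
    proof (rule bexI[OF _ Bage], intro ballI impI)
      fix As Bs assume Asa: "As \<in> age_S (C3I_star prec)" and Bsa: "Bs \<in> age_S (C3I_star prec)"
        and rA: "is_reduct As A" and rB: "is_reduct Bs B"
      obtain f where f: "emb_S As (C3I_star prec) f" using Asa unfolding age_S_def by blast
      obtain g where g: "emb_S Bs (C3I_star prec) g" using Bsa unfolding age_S_def by blast
      have finA: "finite (suniv As)" using Asa unfolding age_S_def by blast
      have cardA: "card (suniv As) = n" using rA unfolding is_reduct_def n_def by simp
      have UB: "suniv Bs = {0..<3*m}" using rB unfolding is_reduct_def B_def by simp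
      have finj: "inj_on f (suniv As)" using f unfolding emb_S_def by blast
      have ginj: "inj_on g (suniv Bs)" using g unfolding emb_S_def by blast
      have q3: "fst (g y) < 3" if "y < 3*m" for y using emb_C3(1)[OF g] that UB by auto
      have edgeB: "C3_edge (y div m) (y' div m) \<longleftrightarrow> C3_edge (fst (g y)) (fst (g y'))"
        if "y < 3*m" "y' < 3*m" for y y'
        using rB emb_C3(2)[OF g, of y y'] that UB unfolding is_reduct_def B_def by auto
      define r0 where "r0 = fst (g 0)"
      have r03: "r0 < 3" unfolding r0_def using q3 m0 by simp
      have qcls: "fst (g y) = (r0 + y div m) mod 3" if "y < 3*m" for y
      proof -
        have d3: "y div m < 3" using that m0 by (simp add: less_mult_imp_div_less)
        have mm: "m < 3*m" "0 < 3*m" using m0 by auto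
        have qm: "fst (g m) = (r0 + 1) mod 3"
        proof -
          have "C3_edge r0 (fst (g m))" using edgeB[OF mm(2) mm(1)] m0 by (simp add: C3_edge_def r0_def)
          thus ?thesis using C3_edge_iff q3[OF mm(1)] r03 by blast
        qed
        have qy: "fst (g y) < 3" using q3 that by simp
        consider "y div m = 0" | "y div m = 1" | "y div m = 2" using d3 by linarith
        then show ?thesis
        proof cases
          case 1
          have "C3_edge (fst (g y)) (fst (g m))" using edgeB[OF that mm(1)] 1 m0
            by (simp add: C3_edge_def)
          then have "fst (g m) = (fst (g y) + 1) mod 3" using C3_edge_iff qy q3[OF mm(1)] by blast
          then show ?thesis using mod3_a[OF qy r03 _ qm 1] by simp
        next
          case 2
          have "C3_edge r0 (fst (g y))" using edgeB[OF mm(2) that] 2 m0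
            by (simp add: C3_edge_def r0_def)
          then show ?thesis using C3_edge_iff qy r03 2 by auto
        next
          case 3
          have "C3_edge (fst (g m)) (fst (g y))" using edgeB[OF mm(1) that] 3 m0
            by (simp add: C3_edge_def)
          then have "fst (g y) = (fst (g m) + 1) mod 3" using C3_edge_iff qy q3[OF mm(1)] by blast
          then show ?thesis using mod3_b[OF r03 qy qm _ 3] by simp
        qed
      qed
      define Bset where "Bset p = {y\<in>{0..<3*m}. fst (g y) = p}" for p
      define Aset where "Aset p = {x\<in>suniv As. fst (f x) = p}" for p
      define ka where "ka x = h (snd (f x))" for x
      define kb where "kb y = h (snd (g y))" for y
      have cardB: "m \<le> card (Bset p)" if "p < 3" for p
      proof -
        define c where "c = (p + 3 - r0) mod 3"
        have c2: "c \<le> 2" unfolding c_def by simp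
        have "{c*m..<c*m+m} \<subseteq> Bset p"
        proof
          fix y assume y: "y \<in> {c*m..<c*m+m}"
          have yd: "y div m = c" using y by (intro div_nat_eqI) (auto simp: mult.commute)
          have "y < c*m + m" using y by simp
          also have "\<dots> = (c+1)*m" by simp
          also have "\<dots> \<le> 3*m" using c2 by (intro mult_right_mono) auto
          finally have "y < 3*m" .
          moreover have "(r0 + c) mod 3 = p" unfolding c_def using mod3_c[OF r03 that] .
          ultimately show "y \<in> Bset p" unfolding Bset_def using qcls yd by auto
        qed
        moreover have "finite (Bset p)" unfolding Bset_def by simp
        ultimately have "card {c*m..<c*m+m} \<le> card (Bset p)" by (intro card_mono)
        thus ?thesis by simp
      qed
      have kbinj: "inj_on kb (Bset p)" for p
      proof (rule inj_onI)
        fix y y' assume "y \<in> Bset p" "y' \<in> Bset p" "kb y = kb y'"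
        then have "g y = g y'" unfolding Bset_def kb_def using hinj by (auto intro: prod_eqI)
        thus "y = y'" using ginj \<open>y \<in> Bset p\<close> \<open>y' \<in> Bset p\<close> UB unfolding Bset_def
          by (auto dest: inj_onD)
      qed
      have "\<forall>p. \<exists>\<phi>. (\<forall>u\<in>ka ` Aset p. \<phi> u \<in> kb ` Bset p) \<and>
               (\<forall>u\<in>ka ` Aset p. \<forall>v\<in>ka ` Aset p. u < v \<longrightarrow> \<phi> u < \<phi> v)"
      proof
        fix p
        show "\<exists>\<phi>. (\<forall>u\<in>ka ` Aset p. \<phi> u \<in> kb ` Bset p) \<and>
               (\<forall>u\<in>ka ` Aset p. \<forall>v\<in>ka ` Aset p. u < v \<longrightarrow> \<phi> u < \<phi> v)"
        proof (rule ordemb)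
          show "finite (ka ` Aset p)" using finA unfolding Aset_def by simp
          show "finite (kb ` Bset p)" unfolding Bset_def by simp
          show "card (ka ` Aset p) \<le> card (kb ` Bset p)"
          proof (cases "p < 3")
            case True
            have "card (ka ` Aset p) \<le> card (Aset p)" by (rule card_image_le) (use finA in \<open>simp add: Aset_def\<close>)
            also have "\<dots> \<le> n" unfolding Aset_def cardA[symmetric] using finA by (intro card_mono) auto
            also have "\<dots> \<le> card (Bset p)" using cardB[OF True] unfolding m_def by simp
            also have "\<dots> = card (kb ` Bset p)" using card_image[OF kbinj] by simp
            finally show ?thesis .
          next
            case False
            have "Aset p = {}" unfolding Aset_def using emb_C3(1)[OF f] False by fastforce
            thus ?thesis by simp
          qed
        qed
      qed
      then obtain \<Phi> where \<Phi>: "\<And>p. (\<forall>u\<in>ka ` Aset p. \<Phi> p u \<in> kb ` Bset p) \<and>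
               (\<forall>u\<in>ka ` Aset p. \<forall>v\<in>ka ` Aset p. u < v \<longrightarrow> \<Phi> p u < \<Phi> p v)" by metis
      define \<psi> where "\<psi> x = inv_into (Bset (fst (f x))) kb (\<Phi> (fst (f x)) (ka x))" for x
      have psi: "\<psi> x < 3*m \<and> fst (g (\<psi> x)) = fst (f x) \<and> kb (\<psi> x) = \<Phi> (fst (f x)) (ka x)"
        if "x \<in> suniv As" for x
      proof -
        have "ka x \<in> ka ` Aset (fst (f x))" using that unfolding Aset_def by auto
        then have i: "\<Phi> (fst (f x)) (ka x) \<in> kb ` Bset (fst (f x))" using \<Phi> by blast
        have "\<psi> x \<in> Bset (fst (f x))" unfolding \<psi>_def using inv_into_into[OF i] .
        moreover have "kb (\<psi> x) = \<Phi> (fst (f x)) (ka x)" unfolding \<psi>_def using f_inv_into_f[OF i] .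
        ultimately show ?thesis unfolding Bset_def by auto
      qed
      have ord: "prec (snd (g (\<psi> x))) (snd (g (\<psi> y))) \<longleftrightarrow> prec (snd (f x)) (snd (f y))"
        if "x \<in> suniv As" "y \<in> suniv As" "fst (f x) = fst (f y)" for x y
      proof -
        have xa: "ka x \<in> ka ` Aset (fst (f x))" "ka y \<in> ka ` Aset (fst (f x))"
          using that unfolding Aset_def by auto
        have mono: "u < v \<Longrightarrow> \<Phi> (fst (f x)) u < \<Phi> (fst (f x)) v"
          if "u \<in> ka ` Aset (fst (f x))" "v \<in> ka ` Aset (fst (f x))" for u v
          using \<Phi> that by blast
        have "kb (\<psi> x) < kb (\<psi> y) \<longleftrightarrow> ka x < ka y"
          using psi[OF that(1)] psi[OF that(2)] that(3) mono[OF xa(1) xa(2)] mono[OF xa(2) xa(1)]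
          by (metis less_asym' linorder_neqE)
        thus ?thesis unfolding hp ka_def kb_def .
      qed
      have "emb_S As Bs \<psi>"
        unfolding emb_S_def
      proof (intro conjI ballI)
        show "inj_on \<psi> (suniv As)"
        proof (rule inj_onI)
          fix x y assume xy: "x \<in> suniv As" "y \<in> suniv As" "\<psi> x = \<psi> y"
          have e: "fst (f x) = fst (f y)" using psi[OF xy(1)] psi[OF xy(2)] xy(3) by simp
          have "\<not> h (snd (f x)) < h (snd (f y))" "\<not> h (snd (f y)) < h (snd (f x))"
            using ord[OF xy(1) xy(2) e] ord[OF xy(2) xy(1) e[symmetric]] xy(3) hp by auto
          then have "snd (f x) = snd (f y)" using hinj by (meson linorder_neqE)
          then have "f x = f y" using e by (simp add: prod_eq_iff)
          thus "x = y" using finj xy by (auto dest: inj_onD)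
        qed
        show "\<psi> ` suniv As \<subseteq> suniv Bs" using psi UB by auto
      next
        fix x y assume xy: "x \<in> suniv As" "y \<in> suniv As"
        have px: "\<psi> x \<in> suniv Bs" "\<psi> y \<in> suniv Bs" using psi xy UB by auto
        show "sedge Bs (\<psi> x) (\<psi> y) = sedge As x y"
          using emb_C3(2)[OF g px] emb_C3(2)[OF f xy] psi xy by simp
        show "sless Bs (\<psi> x) (\<psi> y) = sless As x y"
          using emb_C3(6)[OF g px] emb_C3(6)[OF f xy] psi xy ord[OF xy] by auto
      next
        fix x assume x: "x \<in> suniv As"
        have px: "\<psi> x \<in> suniv Bs" using psi x UB by auto
        show "sp0 Bs (\<psi> x) = sp0 As x"
          using emb_C3(3)[OF g px px] emb_C3(3)[OF f x x] psi x by simp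
        show "sp1 Bs (\<psi> x) = sp1 As x"
          using emb_C3(4)[OF g px px] emb_C3(4)[OF f x x] psi x by simp
        show "sp2 Bs (\<psi> x) = sp2 As x"
          using emb_C3(5)[OF g px px] emb_C3(5)[OF f x x] psi x by simp
      qed
      thus "\<exists>f. emb_S As Bs f" by blast
    qed
  qed
qed

end
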